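(* In the setting of the context, with $V_{\mathbf{i}}=\sum_{\mathbf{n}=\mathbf{0}}^{\mathbf{i}}\mathscr{D}_{\mathbf{n},\mathbf{i}}V^{\mathbf{n}}$ where $\mathscr{D}_{\mathbf{n},\mathbf{i}}=\frac{(-1)^{|\mathbf{n}|-|\mathbf{i}|}}{(|\mathbf{i}|+|\mathbf{n}|+\omega^\star)_{|\mathbf{i}|-|\mathbf{n}|}}\prod_{p=1}^N\binom{\ell_p-n_p}{\ell_p-i_p}(|\mathbf{i}|_1^{p-1}+|\mathbf{n}|_1^{p}+|\boldsymbol{\ell}|_{p+1}^N-a_p+\omega^\star)_{i_p-n_p}$, the inverse change of basis is: for every $\mathbf{n}$ with $0\le n_p\le\ell_p$, \[ V^{\mathbf{n}}=\sum_{\mathbf{i}=\mathbf{0}}^{\mathbf{n}}\overline{\mathscr{D}}_{\mathbf{i},\mathbf{n}}V_{\mathbf{i}},\qquad \overline{\mathscr{D}}_{\mathbf{i},\mathbf{n}}=\frac{1}{(2|\mathbf{i}|+\omega^\star+1)_{|\mathbf{n}|-|\mathbf{i}|}}\prod_{p=1}^N\binom{\ell_p-i_p}{\ell_p-n_p}\big(|\mathbf{n}|_1^{p-1}+|\mathbf{i}|_1^{p}+|\boldsymbol{\ell}|_{p+1}^N-a_p+\omega^\star\big)_{n_p-i_p}. \]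
   Context: Notation: for $N$-tuples of integers, $|\mathbf{n}|_j^k=\sum_{p=j}^k n_p$ (equal to $0$ if $j>k$), $|\mathbf{n}|=|\mathbf{n}|_1^N$, $\mathbf{0}=(0,\dots,0)$; $(x)_k=x(x+1)\cdots(x+k-1)$, $(x)_0=1$. A sum $\sum_{\mathbf{n}=\mathbf{a}}^{\mathbf{b}}$ means the sum over all $\mathbf{n}$ with $a_p\le n_p\le b_p$ for every $p$. Setting: $N\ge1$, $\boldsymbol{\ell}=(\ell_1,\dots,\ell_N)$ nonnegative integers, $\mathcal{V}=\mathbb{C}^{\ell_1+1}\otimes\cdots\otimes\mathbb{C}^{\ell_N+1}$ with basis $V^{\mathbf{n}}$, $0\le n_p\le\ell_p$. Scalars $\theta_0,\theta_0^\star,h,h^\star,\omega,\omega^\star,a_1,\dots,a_N\in\mathbb{C}$ satisfy the standing constraints: $h,h^\star\neq0$; $\omega,\omega^\star\notin\{-2|\boldsymbol{\ell}|+1,\dots,-1\}$; for each $i$, none of $a_i,\ a_i+\omega-\omega^\star,\ a_i-|\boldsymbol{\ell}|-\omega^\star,\ a_i+|\boldsymbol{\ell}|+\omega$ lies in $\{-\ell_i,\dots,-1\}$; and with $S^\pm(\ell,a)=\{\pm(a+k+\tfrac12(\omega-\omega^\star)):k=1,\dots,\ell\}$, for all $i,j$ and signs, $S^{\epsilon_i}(\ell_i,a_i)$ and $S^{\epsilon_j}(\ell_j,a_j)$ are in general position (one contains the other or their union is not a string). *)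

theory Defs
  imports "HOL-Analysis.Analysis" "HOL-Library.Function_Algebras"
begin

text \<open>N-tuples are functions nat => nat, relevant on indices 1..N.
  psum n j k is the partial sum |n|_j^k (0 if j > k).\<close>
definition psum :: "(nat \<Rightarrow> nat) \<Rightarrow> nat \<Rightarrow> nat \<Rightarrow> nat" where
  "psum n j k = (\<Sum>p\<in>{j..k}. n p)"

definition box :: "nat \<Rightarrow> (nat \<Rightarrow> nat) \<Rightarrow> (nat \<Rightarrow> nat) \<Rightarrow> (nat \<Rightarrow> nat) set" where
  "box N a b = Pi\<^sub>E {1..N} (\<lambda>p. {a p..b p})"

definition is_string :: "complex set \<Rightarrow> bool" where
  "is_string S \<longleftrightarrow> (\<exists>c (m::nat). S = {c + of_nat k | k. k \<le> m})"

definition Sset :: "complex \<Rightarrow> nat \<Rightarrow> complex \<Rightarrow> complex \<Rightarrow> complex \<Rightarrow> complex set" where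
  "Sset eps l a \<omega> \<omega>s = {eps * (a + of_nat k + (\<omega> - \<omega>s) / 2) | k. 1 \<le> k \<and> k \<le> l}"

definition general_position :: "complex set \<Rightarrow> complex set \<Rightarrow> bool" where
  "general_position S T \<longleftrightarrow> S \<subseteq> T \<or> T \<subseteq> S \<or> \<not> is_string (S \<union> T)"

definition Dcoef :: "nat \<Rightarrow> (nat \<Rightarrow> nat) \<Rightarrow> (nat \<Rightarrow> complex) \<Rightarrow> complex
    \<Rightarrow> (nat \<Rightarrow> nat) \<Rightarrow> (nat \<Rightarrow> nat) \<Rightarrow> complex" where
  "Dcoef N l a \<omega>s n i =
     (-1) ^ (psum i 1 N - psum n 1 N)
     / pochhammer (of_nat (psum i 1 N + psum n 1 N) + \<omega>s) (psum i 1 N - psum n 1 N)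
     * (\<Prod>p\<in>{1..N}. of_nat ((l p - n p) choose (l p - i p))
          * pochhammer (of_nat (psum i 1 (p - 1) + psum n 1 p + psum l (p + 1) N) - a p + \<omega>s)
                       (i p - n p))"

definition Dbar :: "nat \<Rightarrow> (nat \<Rightarrow> nat) \<Rightarrow> (nat \<Rightarrow> complex) \<Rightarrow> complex
    \<Rightarrow> (nat \<Rightarrow> nat) \<Rightarrow> (nat \<Rightarrow> nat) \<Rightarrow> complex" where
  "Dbar N l a \<omega>s i n =
     1 / pochhammer (of_nat (2 * psum i 1 N) + \<omega>s + 1) (psum n 1 N - psum i 1 N)
     * (\<Prod>p\<in>{1..N}. of_nat ((l p - i p) choose (l p - n p))
          * pochhammer (of_nat (psum n 1 (p - 1) + psum i 1 p + psum l (p + 1) N) - a p + \<omega>s)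
                       (n p - i p))"

text \<open>The space V = C^(l_1+1) (x) ... (x) C^(l_N+1) is modelled by its coordinate
  functions (nat => nat) => complex on index tuples; the standard basis vector V^n
  is the indicator of n.\<close>
definition Vbasis :: "(nat \<Rightarrow> nat) \<Rightarrow> ((nat \<Rightarrow> nat) \<Rightarrow> complex)" where
  "Vbasis n = (\<lambda>m. if m = n then 1 else 0)"

definition cscale :: "complex \<Rightarrow> ((nat \<Rightarrow> nat) \<Rightarrow> complex) \<Rightarrow> ((nat \<Rightarrow> nat) \<Rightarrow> complex)" where
  "cscale c v = (\<lambda>m. c * v m)"

definition Vnew :: "nat \<Rightarrow> (nat \<Rightarrow> nat) \<Rightarrow> (nat \<Rightarrow> complex) \<Rightarrow> complex
    \<Rightarrow> (nat \<Rightarrow> nat) \<Rightarrow> ((nat \<Rightarrow> nat) \<Rightarrow> complex)" where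
  "Vnew N l a \<omega>s i = (\<Sum>n\<in>box N (\<lambda>_. 0) i. cscale (Dcoef N l a \<omega>s n i) (Vbasis n))"

end

theory Submission
  imports Defs
begin


lemma binom_step: "Suc q * (M choose Suc q) = (M - q) * (M choose q)"
  by (metis Suc_times_binomial binomial_absorb_comp diff_Suc_1 times_binomial_minus1_eq zero_less_Suc)

lemma pascal_sum:
  fixes g :: "nat \<Rightarrow> 'a::comm_ring_1"
  shows "(\<Sum>k\<le>Suc K. of_nat (Suc K choose k) * g k) = (\<Sum>k\<le>K. of_nat (K choose k) * (g k + g (Suc k)))"
proof -
  have 1: "(\<Sum>k\<le>Suc K. of_nat (Suc K choose k) * g k) = g 0 + (\<Sum>k\<le>K. of_nat (K choose k) * g (Suc k)) + (\<Sum>k\<le>K. of_nat (K choose Suc k) * g (Suc k))"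
    by (subst sum.atMost_Suc_shift) (simp add: sum.distrib algebra_simps)
  have 2: "(\<Sum>k\<le>K. of_nat (K choose Suc k) * g (Suc k)) = (\<Sum>k<K. of_nat (K choose Suc k) * g (Suc k))"
    by (simp add: lessThan_Suc_atMost[symmetric] sum.atMost_Suc binomial_eq_0)
  have 3: "g 0 + (\<Sum>k<K. of_nat (K choose Suc k) * g (Suc k)) = (\<Sum>k\<le>K. of_nat (K choose k) * g k)"
  proof (cases K)
    case 0 then show ?thesis by simp
  next
    case (Suc K')
    show ?thesis unfolding Suc lessThan_Suc_atMost
      by (subst sum.atMost_Suc_shift) simp
  qed
  show ?thesis using 1 2 3 by (simp add: sum.distrib algebra_simps)
qed

definition cc :: "nat \<Rightarrow> nat \<Rightarrow> nat \<Rightarrow> complex" where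
  "cc M j k = (if k \<le> j then of_nat (M choose (j - k)) else 0)"

lemma cc_step: "cc M (Suc j) k * (of_nat (Suc j) - of_nat k) = cc M j k * (of_nat M + of_nat k - of_nat j)"
proof (cases "k \<le> j")
  case True
  then obtain q where q: "j = k + q" using le_Suc_ex by blast
  have "Suc q * (M choose Suc q) = (M - q) * (M choose q)" by (rule binom_step)
  hence e: "of_nat (Suc q) * of_nat (M choose Suc q) = (of_nat (M - q) :: complex) * of_nat (M choose q)"
    by (metis of_nat_mult)
  show ?thesis
  proof (cases "q \<le> M")
    case True
    then show ?thesis using e q by (simp add: cc_def Suc_diff_le of_nat_diff algebra_simps)
  next
    case False
    then show ?thesis using q by (simp add: cc_def Suc_diff_le binomial_eq_0)
  qed
next
  case False
  then show ?thesis by (cases "k = Suc j") (auto simp: cc_def)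
qed

lemma S2:
  fixes e :: complex
  shows "(\<Sum>k\<le>K. of_nat (K choose k) * (cc M j k * pochhammer (e - of_nat k) k * pochhammer (e + of_nat M) (K - k)))
       = of_nat ((M + K) choose j) * pochhammer (e + of_nat M - of_nat j) K"
proof (induction K arbitrary: j)
  case 0
  then show ?case by (simp add: cc_def)
next
  case (Suc K j)
  show ?case
  proof (cases j)
    case 0
    show ?thesis unfolding 0
      by (subst sum.atMost_Suc_shift) (simp add: cc_def)
  next
    case (Suc j')
    let ?h = "\<lambda>j k. cc M j k * pochhammer (e - of_nat k) k * pochhammer (e + of_nat M) (K - k)"
    let ?g = "\<lambda>k. cc M j k * pochhammer (e - of_nat k) k * pochhammer (e + of_nat M) (Suc K - k)"
    have t: "?g k + ?g (Suc k) = (e + of_nat M - of_nat j + of_nat K) * ?h j k + (e + of_nat M - of_nat j) * ?h j' k"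
      if "k \<le> K" for k
    proof -
      have a: "pochhammer (e + of_nat M) (Suc K - k) = pochhammer (e + of_nat M) (K - k) * (e + of_nat M + of_nat (K - k))"
        using that by (simp add: Suc_diff_le pochhammer_rec')
      have b: "pochhammer (e - of_nat (Suc k)) (Suc k) = (e - of_nat (Suc k)) * pochhammer (e - of_nat k) k"
        by (simp add: pochhammer_rec algebra_simps)
      have c: "cc M j (Suc k) = cc M j' k" using Suc by (simp add: cc_def)
      have d: "cc M j k * (of_nat j - of_nat k) = cc M j' k * (of_nat M + of_nat k - of_nat j')"
        using cc_step[of M j' k] Suc by simp
      have "?g k + ?g (Suc k) = pochhammer (e - of_nat k) k * pochhammer (e + of_nat M) (K - k) *
              (cc M j k * (e + of_nat M + of_nat K - of_nat k) + cc M j' k * (e - of_nat k - 1))"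
      proof -
        have g1: "?g k = cc M j k * pochhammer (e - of_nat k) k * (pochhammer (e + of_nat M) (K - k) * (e + of_nat M + of_nat (K - k)))"
          by (simp only: a)
        have g2: "?g (Suc k) = cc M j' k * ((e - of_nat (Suc k)) * pochhammer (e - of_nat k) k) * pochhammer (e + of_nat M) (K - k)"
          by (simp only: b c diff_Suc_Suc)
        show ?thesis unfolding g1 g2 using that by (simp add: of_nat_diff algebra_simps)
      qed
      also have "cc M j k * (e + of_nat M + of_nat K - of_nat k) + cc M j' k * (e - of_nat k - 1)
          = (e + of_nat M - of_nat j + of_nat K) * cc M j k + (e + of_nat M - of_nat j) * cc M j' k"
        using d Suc by (simp add: algebra_simps)
      finally show ?thesis by (simp add: algebra_simps)
    qed
    have "(\<Sum>k\<le>Suc K. of_nat (Suc K choose k) * ?g k) = (\<Sum>k\<le>K. of_nat (K choose k) * (?g k + ?g (Suc k)))"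
      by (rule pascal_sum)
    also have "\<dots> = (e + of_nat M - of_nat j + of_nat K) * (\<Sum>k\<le>K. of_nat (K choose k) * ?h j k)
        + (e + of_nat M - of_nat j) * (\<Sum>k\<le>K. of_nat (K choose k) * ?h j' k)"
    proof -
      have "(\<Sum>k\<le>K. of_nat (K choose k) * (?g k + ?g (Suc k))) = (\<Sum>k\<le>K. (e + of_nat M - of_nat j + of_nat K) * (of_nat (K choose k) * ?h j k) + (e + of_nat M - of_nat j) * (of_nat (K choose k) * ?h j' k))"
      proof (rule sum.cong[OF refl])
        fix k assume "k \<in> {..K}"
        then have kk: "k \<le> K" by simp
        show "of_nat (K choose k) * (?g k + ?g (Suc k)) = (e + of_nat M - of_nat j + of_nat K) * (of_nat (K choose k) * ?h j k) + (e + of_nat M - of_nat j) * (of_nat (K choose k) * ?h j' k)"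
          by (subst t[OF kk]) (simp add: algebra_simps)
      qed
      then show ?thesis by (simp add: sum_distrib_left sum.distrib)
    qed
    also have "\<dots> = (e + of_nat M - of_nat j + of_nat K) * (of_nat ((M + K) choose j) * pochhammer (e + of_nat M - of_nat j) K)
        + (e + of_nat M - of_nat j) * (of_nat ((M + K) choose j') * pochhammer (e + of_nat M - of_nat j') K)"
      by (simp only: Suc.IH)
    also have "\<dots> = of_nat ((M + Suc K) choose j) * pochhammer (e + of_nat M - of_nat j) (Suc K)"
    proof -
      have p1: "pochhammer (e + of_nat M - of_nat j) (Suc K) = pochhammer (e + of_nat M - of_nat j) K * (e + of_nat M - of_nat j + of_nat K)"
        by (simp add: pochhammer_rec')
      have p2: "pochhammer (e + of_nat M - of_nat j) (Suc K) = (e + of_nat M - of_nat j) * pochhammer (e + of_nat M - of_nat j') K"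
        using Suc by (simp add: pochhammer_rec algebra_simps)
      have bb: "(M + Suc K) choose j = ((M + K) choose j) + ((M + K) choose j')"
        using Suc by simp
      show ?thesis
        apply (simp only: bb of_nat_add distrib_right)
        apply (subst (1) p1)
        apply (subst p2)
        by (simp add: algebra_simps)
    qed
    finally show ?thesis .
  qed
qed

lemma poch_nz:
  fixes x :: complex
  assumes "\<And>j. a \<le> j \<Longrightarrow> j < a + n \<Longrightarrow> x + of_nat j \<noteq> 0"
  shows "pochhammer (x + of_nat a) n \<noteq> 0"
proof
  assume "pochhammer (x + of_nat a) n = 0"
  then obtain k where k: "k < n" "x + of_nat a = - of_nat k" by (auto simp: pochhammer_eq_0_iff)
  have "x + of_nat (a + k) = (x + of_nat a) + of_nat k" by (simp add: algebra_simps)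
  also have "\<dots> = 0" using k(2) by simp
  finally have "x + of_nat (a + k) = 0" .
  with assms[of "a + k"] k show False by simp
qed

lemma S1:
  fixes x :: complex
  assumes K1: "K \<ge> 1" and nz: "\<And>j. 1 \<le> j \<Longrightarrow> j \<le> 2 * K - 1 \<Longrightarrow> x + of_nat j \<noteq> 0"
  shows "(\<Sum>k\<le>K. of_nat (K choose k) * (-1) ^ k / (pochhammer (x + of_nat k) k * pochhammer (x + of_nat (2 * k) + 1) (K - k))) = 0"
proof -
  define G where "G k = (if k = 0 then 0 else - ((-1) ^ k * of_nat ((K - 1) choose (k - 1)) / pochhammer (x + of_nat k) K))" for k
  have t: "of_nat (K choose k) * (-1) ^ k / (pochhammer (x + of_nat k) k * pochhammer (x + of_nat (2 * k) + 1) (K - k)) = G (Suc k) - G k"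
    if kK: "k \<le> K" for k
  proof -
    consider "k = 0" | "k = K" | "0 < k" "k < K" using kK by linarith
    then show ?thesis
    proof cases
      case 1
      have "x + of_nat (2 * 0) + 1 = x + of_nat 1" by simp
      then show ?thesis using 1 by (simp add: G_def)
    next
      case 2
      then have "k \<noteq> 0" using K1 by simp
      then show ?thesis using 2 by (simp add: G_def binomial_eq_0)
    next
      case 3
      obtain K' where K': "K = Suc K'" using K1 by (cases K) auto
      obtain k' where k': "k = Suc k'" using 3 by (cases k) auto
      define P where "P = pochhammer (x + of_nat k + 1) K'"
      define A where "A = pochhammer (x + of_nat k) k"
      define B where "B = pochhammer (x + of_nat (2 * k) + 1) (K - k)"
      have nzk: "x + of_nat k \<noteq> 0" using nz[of k] 3 by simp
      have nzkK: "x + of_nat k + of_nat K \<noteq> 0" using nz[of "k + K"] 3 by (simp add: add.assoc)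
      have nzP: "P \<noteq> 0" unfolding P_def
        using poch_nz[of "k + 1" K' x] nz 3 K' by (simp add: ac_simps)
      have nzA: "A \<noteq> 0" unfolding A_def
        using poch_nz[of k k x] nz 3 by simp
      have nzB: "B \<noteq> 0" unfolding B_def
        using poch_nz[of "2 * k + 1" "K - k" x] nz 3 by (simp add: ac_simps)
      have p1: "pochhammer (x + of_nat k) K = (x + of_nat k) * P"
        unfolding P_def K' by (simp add: pochhammer_rec)
      have p2: "pochhammer (x + of_nat (Suc k)) K = P * (x + of_nat k + of_nat K)"
        unfolding P_def K' by (simp add: pochhammer_rec' algebra_simps)
      have p3: "A * (x + of_nat (2 * k)) * B = (x + of_nat k) * P * (x + of_nat k + of_nat K)"
      proof -
        have "pochhammer (x + of_nat k) (k + (1 + (K - k))) = A * (pochhammer (x + of_nat k + of_nat k) 1 * B)"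
          unfolding A_def B_def by (simp only: pochhammer_product' add.assoc of_nat_add mult_2 of_nat_1)
        also have "k + (1 + (K - k)) = Suc K" using 3 by simp
        finally have "pochhammer (x + of_nat k) (Suc K) = A * ((x + of_nat (2 * k)) * B)"
          by (simp add: algebra_simps)
        moreover have "pochhammer (x + of_nat k) (Suc K) = (x + of_nat k) * P * (x + of_nat k + of_nat K)"
        proof -
          have "pochhammer (x + of_nat k) (Suc K) = (x + of_nat k) * pochhammer (x + of_nat k + 1) K"
            by (simp only: pochhammer_rec)
          also have "pochhammer (x + of_nat k + 1) K = P * (x + of_nat k + of_nat K)"
            unfolding P_def K' by (simp only: pochhammer_rec') (simp add: algebra_simps)
          finally show ?thesis by (simp add: algebra_simps)
        qed
        ultimately show ?thesis by (simp add: algebra_simps)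
      qed
      have bin1: "of_nat (K choose k) = (of_nat (K' choose k) + of_nat (K' choose k') :: complex)"
        using K' k' by simp
      have bin2: "of_nat K * (of_nat (K' choose k') :: complex) = of_nat k * of_nat (K choose k)"
      proof -
        have "K * (K' choose k') = k * (K choose k)"
          using times_binomial_minus1_eq[of k K] 3 K' k' by simp
        then show ?thesis by (metis of_nat_mult)
      qed
      have num: "of_nat (K choose k) * (x + of_nat (2 * k)) = of_nat (K' choose k) * (x + of_nat k) + of_nat (K' choose k') * (x + of_nat k + of_nat K)"
        using bin1 bin2 by (simp add: algebra_simps)
      have nz2k: "x + of_nat (2 * k) \<noteq> 0" using p3 nzk nzP nzkK by auto
      have lhs: "of_nat (K choose k) / (A * B) = of_nat (K choose k) * (x + of_nat (2 * k)) / ((x + of_nat k) * P * (x + of_nat k + of_nat K))"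
        unfolding p3[symmetric] using nz2k by simp
      have "G (Suc k) - G k = (-1) ^ k * (of_nat (K' choose k) / (P * (x + of_nat k + of_nat K)) + of_nat (K' choose k') / ((x + of_nat k) * P))"
        unfolding G_def using 3 K' k' p1 p2 by (simp add: algebra_simps)
      also have "\<dots> = (-1) ^ k * (of_nat (K choose k) * (x + of_nat (2 * k)) / ((x + of_nat k) * P * (x + of_nat k + of_nat K)))"
        unfolding num using nzk nzkK nzP by (simp add: add_divide_distrib)
      also have "\<dots> = (-1) ^ k * (of_nat (K choose k) / (A * B))" using lhs by simp
      finally show ?thesis unfolding A_def B_def by simp
    qed
  qed
  have "(\<Sum>k\<le>K. of_nat (K choose k) * (-1) ^ k / (pochhammer (x + of_nat k) k * pochhammer (x + of_nat (2 * k) + 1) (K - k))) = (\<Sum>k<Suc K. G (Suc k) - G k)"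
    unfolding lessThan_Suc_atMost by (rule sum.cong[OF refl], rule t, simp)
  also have "\<dots> = G (Suc K) - G 0" by (rule sum_lessThan_telescope)
  also have "\<dots> = 0" using K1 by (simp add: G_def binomial_eq_0)
  finally show ?thesis .
qed



lemma psum_Suc: "psum g 1 (Suc N) = psum g 1 N + g (Suc N)"
  unfolding psum_def by simp

lemma psum_upd: "k < q \<Longrightarrow> psum (g(q := y)) j k = psum g j k"
  unfolding psum_def by (rule sum.cong) auto

lemma psum_mono: "(\<And>p. p \<in> {j..k} \<Longrightarrow> m p \<le> n p) \<Longrightarrow> psum m j k \<le> psum n j k"
  unfolding psum_def by (rule sum_mono) auto

definition FF :: "nat \<Rightarrow> (nat \<Rightarrow> nat) \<Rightarrow> (nat \<Rightarrow> nat) \<Rightarrow> (nat \<Rightarrow> complex) \<Rightarrow> (nat \<Rightarrow> nat) \<Rightarrow> complex" where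
  "FF N m n d i = (\<Prod>p\<in>{1..N}. of_nat ((n p - m p) choose (i p - m p))
      * pochhammer (of_nat (psum i 1 (p - 1) + psum m 1 p) + d p) (i p - m p)
      * pochhammer (of_nat (psum n 1 (p - 1) + psum i 1 p) + d p) (n p - i p))"

definition GG :: "nat \<Rightarrow> (nat \<Rightarrow> nat) \<Rightarrow> (nat \<Rightarrow> nat) \<Rightarrow> (nat \<Rightarrow> complex) \<Rightarrow> complex" where
  "GG N m n d = (\<Prod>p\<in>{1..N}. pochhammer (of_nat (psum n 1 (p - 1) + psum m 1 p) + d p) (n p - m p))"

lemma FF_Suc: "FF (Suc N) m n d i = FF N m n d i *
     (of_nat ((n (Suc N) - m (Suc N)) choose (i (Suc N) - m (Suc N)))
      * pochhammer (of_nat (psum i 1 N + psum m 1 (Suc N)) + d (Suc N)) (i (Suc N) - m (Suc N))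
      * pochhammer (of_nat (psum n 1 N + psum i 1 (Suc N)) + d (Suc N)) (n (Suc N) - i (Suc N)))"
  unfolding FF_def by (simp add: mult.assoc)

lemma FF_Suc_upd:
  "FF (Suc N) m n d (g(Suc N := y)) = FF N m n d g *
     (of_nat ((n (Suc N) - m (Suc N)) choose (y - m (Suc N)))
      * pochhammer (of_nat (psum g 1 N + psum m 1 (Suc N)) + d (Suc N)) (y - m (Suc N))
      * pochhammer (of_nat (psum n 1 N + (psum g 1 N + y)) + d (Suc N)) (n (Suc N) - y))"
proof -
  have e1: "FF N m n d (g(Suc N := y)) = FF N m n d g"
    unfolding FF_def by (rule prod.cong) (auto simp: psum_upd)
  have e2: "psum (g(Suc N := y)) 1 N = psum g 1 N" by (simp add: psum_upd)
  have e3: "psum (g(Suc N := y)) 1 (Suc N) = psum g 1 N + y" unfolding psum_Suc e2 by simp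
  show ?thesis unfolding FF_Suc e1 e2 e3 by simp
qed

lemma GG_Suc: "GG (Suc N) m n d = GG N m n d * pochhammer (of_nat (psum n 1 N + psum m 1 (Suc N)) + d (Suc N)) (n (Suc N) - m (Suc N))"
  unfolding GG_def by simp

lemma box_Suc: "box (Suc N) m n = (\<lambda>(y, g). g(Suc N := y)) ` ({m (Suc N)..n (Suc N)} \<times> box N m n)"
proof -
  have "{1..Suc N} = insert (Suc N) {1..N}" by auto
  then show ?thesis unfolding box_def by (simp add: PiE_insert_eq)
qed

lemma box_Suc_inj: "inj_on (\<lambda>(y, g). g(Suc N := y)) ({m (Suc N)..n (Suc N)} \<times> box N m n)"
  unfolding box_def by (rule inj_combinator) auto

lemma sum_box_Suc:
  "(\<Sum>i\<in>box (Suc N) m n. h i) = (\<Sum>y\<in>{m (Suc N)..n (Suc N)}. \<Sum>g\<in>box N m n. h (g(Suc N := y)))"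
  unfolding box_Suc by (subst sum.reindex[OF box_Suc_inj]) (simp add: sum.cartesian_product split_def)

lemma finite_box: "finite (box N m n)"
  unfolding box_def by (rule finite_PiE) auto

lemma KL:
  assumes "\<forall>p\<in>{1..N}. m p \<le> n p"
  shows "(\<Sum>i\<in>box N m n. if psum i 1 N = s then FF N m n d i else 0)
       = (if psum m 1 N \<le> s then of_nat ((psum n 1 N - psum m 1 N) choose (s - psum m 1 N)) else 0) * GG N m n d"
  using assms
proof (induction N arbitrary: s)
  case 0
  have b: "box 0 m n = {\<lambda>_. undefined}" unfolding box_def by simp
  have p: "psum i 1 0 = 0" for i unfolding psum_def by simp
  show ?case unfolding b p by (simp add: FF_def GG_def)
next
  case (Suc N s)
  have hyp: "\<forall>p\<in>{1..N}. m p \<le> n p" using Suc.prems by simp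
  define r where "r = psum m 1 N"
  define m' where "m' = m (Suc N)"
  define n' where "n' = n (Suc N)"
  define M where "M = psum n 1 N - r"
  define K where "K = n' - m'"
  define d' where "d' = d (Suc N)"
  have mn': "m' \<le> n'" using Suc.prems unfolding m'_def n'_def by simp
  have rn: "r \<le> psum n 1 N" unfolding r_def using hyp by (intro psum_mono) auto
  have nM: "psum n 1 N = M + r" using rn unfolding M_def by simp
  have mS: "psum m 1 (Suc N) = r + m'" unfolding r_def m'_def psum_Suc by simp
  have mS': "psum m 1 (Suc N) = r + m (Suc N)" unfolding r_def psum_Suc by simp
  have nS: "psum n 1 (Suc N) = M + r + n'" unfolding n'_def psum_Suc nM by simp
  define fac where "fac y t = of_nat (K choose (y - m')) * pochhammer (of_nat (t + (r + m')) + d') (y - m')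
      * pochhammer (of_nat (psum n 1 N + (t + y)) + d') (n' - y)" for y t
  have stepA: "(\<Sum>g\<in>box N m n. if psum (g(Suc N := y)) 1 (Suc N) = s then FF (Suc N) m n d (g(Suc N := y)) else 0)
      = (if y \<le> s \<and> r \<le> s - y then of_nat (M choose (s - y - r)) else 0) * fac y (s - y) * GG N m n d" for y
  proof (cases "y \<le> s")
    case True
    have "(\<Sum>g\<in>box N m n. if psum (g(Suc N := y)) 1 (Suc N) = s then FF (Suc N) m n d (g(Suc N := y)) else 0)
        = (\<Sum>g\<in>box N m n. (if psum g 1 N = s - y then FF N m n d g else 0) * fac y (s - y))"
    proof (rule sum.cong[OF refl])
      fix g
      have e3: "psum (g(Suc N := y)) 1 (Suc N) = psum g 1 N + y" unfolding psum_Suc by (simp add: psum_upd)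
      show "(if psum (g(Suc N := y)) 1 (Suc N) = s then FF (Suc N) m n d (g(Suc N := y)) else 0) =
          (if psum g 1 N = s - y then FF N m n d g else 0) * fac y (s - y)"
        unfolding e3 FF_Suc_upd mS' fac_def K_def m'_def n'_def d'_def using True
        by (auto simp: algebra_simps)
    qed
    also have "\<dots> = (\<Sum>g\<in>box N m n. if psum g 1 N = s - y then FF N m n d g else 0) * fac y (s - y)"
      by (simp add: sum_distrib_right)
    also have "\<dots> = (if r \<le> s - y then of_nat (M choose (s - y - r)) else 0) * GG N m n d * fac y (s - y)"
      unfolding Suc.IH[OF hyp] r_def M_def by simp
    finally show ?thesis using True by (simp add: algebra_simps)
  next
    case False
    have "psum (g(Suc N := y)) 1 (Suc N) \<noteq> s" for g
      unfolding psum_Suc using False by (simp add: psum_upd)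
    then show ?thesis using False by simp
  qed
  have LHS: "(\<Sum>i\<in>box (Suc N) m n. if psum i 1 (Suc N) = s then FF (Suc N) m n d i else 0)
      = (\<Sum>y\<in>{m'..n'}. (if y \<le> s \<and> r \<le> s - y then of_nat (M choose (s - y - r)) else 0) * fac y (s - y)) * GG N m n d"
    unfolding sum_box_Suc stepA m'_def[symmetric] n'_def[symmetric] by (simp add: sum_distrib_right)
  show ?case
  proof (cases "r + m' \<le> s")
    case False
    have "(\<Sum>y\<in>{m'..n'}. (if y \<le> s \<and> r \<le> s - y then of_nat (M choose (s - y - r)) else 0) * fac y (s - y)) = 0"
      by (rule sum.neutral) (use False in auto)
    then show ?thesis unfolding LHS using False mS by simp
  next
    case True
    define j where "j = s - r - m'"
    define e where "e = of_nat (2 * r + m' + j) + d'"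
    have sj: "s = r + m' + j" unfolding j_def using True by simp
    have tm: "(if m' + k \<le> s \<and> r \<le> s - (m' + k) then of_nat (M choose (s - (m' + k) - r)) else 0) * fac (m' + k) (s - (m' + k))
        = of_nat (K choose k) * (cc M j k * pochhammer (e - of_nat k) k * pochhammer (e + of_nat M) (K - k))"
      if "k \<le> K" for k
    proof (cases "k \<le> j")
      case True
      have c1: "m' + k \<le> s \<and> r \<le> s - (m' + k)" using True sj by simp
      have c2: "s - (m' + k) - r = j - k" using True sj by simp
      have c3: "of_nat (s - (m' + k) + (r + m')) + d' = e - of_nat k"
      proof -
        have "s - (m' + k) + (r + m') = (2 * r + m' + j) - k" using True sj by simp
        then show ?thesis unfolding e_def using True by (simp add: of_nat_diff)
      qed
      have c4: "of_nat (psum n 1 N + (s - (m' + k) + (m' + k))) + d' = e + of_nat M"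
        unfolding e_def nM using c1 sj by simp
      have c5: "n' - (m' + k) = K - k" unfolding K_def by simp
      show ?thesis unfolding fac_def c3 c4 c5 using c1 c2 True by (simp add: cc_def)
    next
      case False
      have nc: "\<not> (m' + k \<le> s \<and> r \<le> s - (m' + k))" using False sj by linarith
      show ?thesis unfolding if_not_P[OF nc] using False by (simp add: cc_def)
    qed
    have "(\<Sum>y\<in>{m'..n'}. (if y \<le> s \<and> r \<le> s - y then of_nat (M choose (s - y - r)) else 0) * fac y (s - y))
        = (\<Sum>k\<in>{0..K}. (if m' + k \<le> s \<and> r \<le> s - (m' + k) then of_nat (M choose (s - (m' + k) - r)) else 0) * fac (m' + k) (s - (m' + k)))"
      unfolding K_def by (subst sum.atLeastAtMost_shift_0[OF mn']) (simp add: comp_def)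
    also have "\<dots> = (\<Sum>k\<le>K. of_nat (K choose k) * (cc M j k * pochhammer (e - of_nat k) k * pochhammer (e + of_nat M) (K - k)))"
      unfolding atMost_atLeast0 by (rule sum.cong[OF refl]) (simp add: tm)
    also have "\<dots> = of_nat ((M + K) choose j) * pochhammer (e + of_nat M - of_nat j) K"
      by (rule S2)
    finally have sumv: "(\<Sum>y\<in>{m'..n'}. (if y \<le> s \<and> r \<le> s - y then of_nat (M choose (s - y - r)) else 0) * fac y (s - y))
        = of_nat ((M + K) choose j) * pochhammer (e + of_nat M - of_nat j) K" .
    have r1: "psum n 1 (Suc N) - psum m 1 (Suc N) = M + K" unfolding nS mS K_def using mn' by simp
    have r2: "s - psum m 1 (Suc N) = j" unfolding mS j_def by simp
    have r3: "e + of_nat M - of_nat j = of_nat (psum n 1 N + psum m 1 (Suc N)) + d (Suc N)"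
      unfolding e_def d'_def nM mS by simp
    show ?thesis unfolding LHS sumv GG_Suc r1 r2 r3 using True mS
      by (simp add: K_def m'_def n'_def algebra_simps)
  qed
qed

lemma sum_fun_apply: "(\<Sum>x\<in>A. f x) y = (\<Sum>x\<in>A. f x y)"
  for f :: "'a \<Rightarrow> 'b \<Rightarrow> 'c::comm_monoid_add"
  by (induct A rule: infinite_finite_induct) auto

lemma binom_prod:
  assumes "m \<le> i" "i \<le> n" "n \<le> l"
  shows "((l - i) choose (l - n)) * ((l - m) choose (l - i)) = ((l - m) choose (n - m)) * ((n - m) choose (i - m))"
proof -
  have "((l - m) choose (l - i)) * ((l - i) choose (l - n)) = ((l - m) choose (l - n)) * (((l - m) - (l - n)) choose ((l - i) - (l - n)))"
    by (rule choose_mult) (use assms in auto)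
  also have "(l - m) - (l - n) = n - m" using assms by simp
  also have "(l - i) - (l - n) = n - i" using assms by simp
  also have "(l - m) choose (l - n) = (l - m) choose (n - m)"
    using binomial_symmetric[of "l - n" "l - m"] assms by simp
  also have "(n - m) choose (n - i) = (n - m) choose (i - m)"
    using binomial_symmetric[of "n - i" "n - m"] assms by simp
  finally show ?thesis by (simp add: mult.commute)
qed

lemma box_mem: "i \<in> box N lo hi \<longleftrightarrow> (\<forall>p\<in>{1..N}. lo p \<le> i p \<and> i p \<le> hi p) \<and> i \<in> extensional {1..N}"
  unfolding box_def by (auto simp: PiE_iff)

lemma inv_sum:
  fixes w :: complex
  assumes nl: "n \<in> box N (\<lambda>_. 0) l" and mb: "m \<in> box N (\<lambda>_. 0) n"
    and nzw: "\<And>q. 1 \<le> q \<Longrightarrow> q \<le> 2 * psum l 1 N - 1 \<Longrightarrow> w + of_nat q \<noteq> 0"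
  shows "(\<Sum>i\<in>box N m n. Dbar N l a w i n * Dcoef N l a w m i) = (if m = n then 1 else 0)"
proof -
  have mn: "\<forall>p\<in>{1..N}. m p \<le> n p" using mb by (simp add: box_mem)
  have nlp: "\<forall>p\<in>{1..N}. n p \<le> l p" using nl by (simp add: box_mem)
  define r where "r = psum m 1 N"
  define t where "t = psum n 1 N"
  define d where "d p = of_nat (psum l (p + 1) N) - a p + w" for p
  define g where "g s = (-1) ^ (s - r) / (pochhammer (of_nat (s + r) + w) (s - r) * pochhammer (of_nat (2 * s) + w + 1) (t - s))" for s
  define Bc where "Bc = (\<Prod>p\<in>{1..N}. (of_nat ((l p - m p) choose (n p - m p)) :: complex))"
  have tl: "t \<le> psum l 1 N" unfolding t_def using nlp by (intro psum_mono) auto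
  have rt: "r \<le> t" unfolding r_def t_def using mn by (intro psum_mono) auto
  have irange: "r \<le> psum i 1 N \<and> psum i 1 N \<le> t" if "i \<in> box N m n" for i
    using that unfolding r_def t_def by (auto simp: box_mem intro!: psum_mono)
  have prodeq: "Dbar N l a w i n * Dcoef N l a w m i = g (psum i 1 N) * (Bc * FF N m n d i)"
    if ib: "i \<in> box N m n" for i
  proof -
    have ip: "\<forall>p\<in>{1..N}. m p \<le> i p \<and> i p \<le> n p" using ib by (simp add: box_mem)
    have pp: "(of_nat ((l p - i p) choose (l p - n p))
          * pochhammer (of_nat (psum n 1 (p - 1) + psum i 1 p + psum l (p + 1) N) - a p + w) (n p - i p))
        * (of_nat ((l p - m p) choose (l p - i p))
          * pochhammer (of_nat (psum i 1 (p - 1) + psum m 1 p + psum l (p + 1) N) - a p + w) (i p - m p))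
        = of_nat ((l p - m p) choose (n p - m p)) * (of_nat ((n p - m p) choose (i p - m p))
          * pochhammer (of_nat (psum i 1 (p - 1) + psum m 1 p) + d p) (i p - m p)
          * pochhammer (of_nat (psum n 1 (p - 1) + psum i 1 p) + d p) (n p - i p))"
      if pN: "p \<in> {1..N}" for p
    proof -
      have b: "of_nat ((l p - i p) choose (l p - n p)) * of_nat ((l p - m p) choose (l p - i p))
          = (of_nat ((l p - m p) choose (n p - m p)) * of_nat ((n p - m p) choose (i p - m p)) :: complex)"
        using binom_prod[of "m p" "i p" "n p" "l p"] ip nlp pN by (metis of_nat_mult)
      have c1: "of_nat (psum n 1 (p - 1) + psum i 1 p + psum l (p + 1) N) - a p + w = of_nat (psum n 1 (p - 1) + psum i 1 p) + d p"
        unfolding d_def by simp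
      have c2: "of_nat (psum i 1 (p - 1) + psum m 1 p + psum l (p + 1) N) - a p + w = of_nat (psum i 1 (p - 1) + psum m 1 p) + d p"
        unfolding d_def by simp
      show ?thesis unfolding c1 c2 using b by (simp add: algebra_simps)
    qed
    have "(\<Prod>p\<in>{1..N}. of_nat ((l p - i p) choose (l p - n p))
          * pochhammer (of_nat (psum n 1 (p - 1) + psum i 1 p + psum l (p + 1) N) - a p + w) (n p - i p))
        * (\<Prod>p\<in>{1..N}. of_nat ((l p - m p) choose (l p - i p))
          * pochhammer (of_nat (psum i 1 (p - 1) + psum m 1 p + psum l (p + 1) N) - a p + w) (i p - m p))
        = Bc * FF N m n d i"
      unfolding Bc_def FF_def prod.distrib[symmetric] by (rule prod.cong[OF refl]) (rule pp)
    then show ?thesis unfolding Dbar_def Dcoef_def g_def r_def t_def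
      by (simp add: divide_inverse inverse_mult_distrib mult_ac)
  qed
  have fin: "finite (box N m n)" by (rule finite_box)
  have "(\<Sum>i\<in>box N m n. Dbar N l a w i n * Dcoef N l a w m i) = Bc * (\<Sum>i\<in>box N m n. g (psum i 1 N) * FF N m n d i)"
    by (simp add: prodeq sum_distrib_left mult_ac)
  also have "(\<Sum>i\<in>box N m n. g (psum i 1 N) * FF N m n d i)
      = (\<Sum>s\<in>{r..t}. g s * (\<Sum>i\<in>box N m n. if psum i 1 N = s then FF N m n d i else 0))"
  proof -
    have "(\<Sum>s\<in>{r..t}. g s * (\<Sum>i\<in>box N m n. if psum i 1 N = s then FF N m n d i else 0))
        = (\<Sum>s\<in>{r..t}. \<Sum>i\<in>box N m n. if psum i 1 N = s then g s * FF N m n d i else 0)"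
      by (simp add: sum_distrib_left if_distrib cong: if_cong)
    also have "\<dots> = (\<Sum>i\<in>box N m n. \<Sum>s\<in>{r..t}. if psum i 1 N = s then g s * FF N m n d i else 0)"
      by (rule sum.swap)
    also have "\<dots> = (\<Sum>i\<in>box N m n. g (psum i 1 N) * FF N m n d i)"
      by (rule sum.cong[OF refl]) (use irange in auto)
    finally show ?thesis by simp
  qed
  also have "\<dots> = (\<Sum>s\<in>{r..t}. g s * (of_nat ((t - r) choose (s - r)) * GG N m n d))"
  proof (rule sum.cong[OF refl])
    fix s assume "s \<in> {r..t}"
    then have rs: "r \<le> s" by simp
    have "(\<Sum>i\<in>box N m n. if psum i 1 N = s then FF N m n d i else 0) = of_nat ((t - r) choose (s - r)) * GG N m n d"
      using KL[OF mn, of s d] rs unfolding r_def t_def by simp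
    then show "g s * (\<Sum>i\<in>box N m n. if psum i 1 N = s then FF N m n d i else 0) = g s * (of_nat ((t - r) choose (s - r)) * GG N m n d)"
      by simp
  qed
  also have "\<dots> = GG N m n d * (\<Sum>k\<in>{0..t - r}. of_nat ((t - r) choose k) * g (r + k))"
    by (subst sum.atLeastAtMost_shift_0[OF rt]) (simp add: sum_distrib_left comp_def mult_ac)
  finally have main: "(\<Sum>i\<in>box N m n. Dbar N l a w i n * Dcoef N l a w m i)
      = Bc * (GG N m n d * (\<Sum>k\<in>{0..t - r}. of_nat ((t - r) choose k) * g (r + k)))" .
  show ?thesis
  proof (cases "r = t")
    case True
    have mneq: "m = n"
    proof (rule ccontr)
      assume "m \<noteq> n"
      have mext: "m \<in> extensional {1..N}" and next': "n \<in> extensional {1..N}"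
        using mb nl by (auto simp: box_mem)
      obtain p where "m p \<noteq> n p" using \<open>m \<noteq> n\<close> by auto
      then have p: "p \<in> {1..N}" using mext next' by (metis extensional_arb)
      with \<open>m p \<noteq> n p\<close> mn have "m p < n p" by force
      then have "psum m 1 N < psum n 1 N" unfolding psum_def
        using mn p by (intro sum_strict_mono_ex1) auto
      then show False using True unfolding r_def t_def by simp
    qed
    have "Bc = 1" unfolding Bc_def mneq by simp
    moreover have "GG N m n d = 1" unfolding GG_def mneq by simp
    moreover have "g r = 1" unfolding g_def using True by simp
    ultimately show ?thesis unfolding main using True mneq by simp
  next
    case False
    define K where "K = t - r"
    define x where "x = of_nat (2 * r) + w"
    have K1: "K \<ge> 1" using False rt unfolding K_def by simp
    have nzx: "x + of_nat j \<noteq> 0" if "1 \<le> j" "j \<le> 2 * K - 1" for j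
    proof -
      have "x + of_nat j = w + of_nat (2 * r + j)" unfolding x_def by simp
      moreover have "2 * r + j \<le> 2 * psum l 1 N - 1" using that tl rt unfolding K_def by linarith
      ultimately show ?thesis using nzw[of "2 * r + j"] that by (simp add: add.assoc)
    qed
    have "(\<Sum>k\<in>{0..t - r}. of_nat ((t - r) choose k) * g (r + k))
        = (\<Sum>k\<le>K. of_nat (K choose k) * (-1) ^ k / (pochhammer (x + of_nat k) k * pochhammer (x + of_nat (2 * k) + 1) (K - k)))"
      unfolding atMost_atLeast0 K_def
    proof (rule sum.cong[OF refl])
      fix k assume "k \<in> {0..t - r}"
      then have kk: "k \<le> t - r" by simp
      have e1: "of_nat (r + k + r) + w = x + of_nat k" unfolding x_def by simp
      have e2: "of_nat (2 * (r + k)) + w + 1 = x + of_nat (2 * k) + 1" unfolding x_def by simp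
      have e3: "t - (r + k) = t - r - k" by simp
      show "of_nat ((t - r) choose k) * g (r + k) = of_nat ((t - r) choose k) * (-1) ^ k / (pochhammer (x + of_nat k) k * pochhammer (x + of_nat (2 * k) + 1) (t - r - k))"
        unfolding g_def e1 e2 e3 by simp
    qed
    also have "\<dots> = 0" by (rule S1[OF K1 nzx])
    finally have z: "(\<Sum>k\<in>{0..t - r}. of_nat ((t - r) choose k) * g (r + k)) = 0" .
    have "m \<noteq> n" using False unfolding r_def t_def by auto
    then show ?thesis unfolding main z by simp
  qed
qed

lemma sum_delta_mult: "finite A \<Longrightarrow> (\<Sum>x\<in>A. f x * (if m = x then 1 else 0)) = (if m \<in> A then f m else (0::complex))"
proof -
  assume fA: "finite A"
  have e: "(\<lambda>x. f x * (if m = x then 1 else 0)) = (\<lambda>x. if m = x then f x else 0)" by auto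
  show ?thesis unfolding e using fA by simp
qed

theorem mainTheorem5:
  fixes N :: nat and l :: "nat \<Rightarrow> nat"
    and \<theta>0 \<theta>0s h hs \<omega> \<omega>s :: complex and a :: "nat \<Rightarrow> complex"
    and n :: "nat \<Rightarrow> nat"
  assumes "N \<ge> 1"
    and "h \<noteq> 0" and "hs \<noteq> 0"
    and "\<forall>k::int. - 2 * int (psum l 1 N) + 1 \<le> k \<and> k \<le> -1 \<longrightarrow> \<omega> \<noteq> of_int k"
    and "\<forall>k::int. - 2 * int (psum l 1 N) + 1 \<le> k \<and> k \<le> -1 \<longrightarrow> \<omega>s \<noteq> of_int k"
    and "\<forall>i\<in>{1..N}. \<forall>k::int. - int (l i) \<le> k \<and> k \<le> -1 \<longrightarrow>
           a i \<noteq> of_int k \<and> a i + \<omega> - \<omega>s \<noteq> of_int k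
           \<and> a i - of_nat (psum l 1 N) - \<omega>s \<noteq> of_int k
           \<and> a i + of_nat (psum l 1 N) + \<omega> \<noteq> of_int k"
    and "\<forall>i\<in>{1..N}. \<forall>j\<in>{1..N}. \<forall>ei\<in>{1, -1}. \<forall>ej\<in>{1, -1}.
           general_position (Sset ei (l i) (a i) \<omega> \<omega>s) (Sset ej (l j) (a j) \<omega> \<omega>s)"
    and "n \<in> box N (\<lambda>_. 0) l"
  shows "Vbasis n = (\<Sum>i\<in>box N (\<lambda>_. 0) n. cscale (Dbar N l a \<omega>s i n) (Vnew N l a \<omega>s i))"
proof -
  note ws = assms(5)
  note nl = assms(8)
  have nzw: "\<omega>s + of_nat q \<noteq> 0" if q: "1 \<le> q" "q \<le> 2 * psum l 1 N - 1" for q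
  proof
    assume eq: "\<omega>s + of_nat q = 0"
    have "- 2 * int (psum l 1 N) + 1 \<le> - int q \<and> - int q \<le> -1" using q by linarith
    then have "\<omega>s \<noteq> of_int (- int q)" using ws by blast
    moreover have "\<omega>s = of_int (- int q)" using eq by (simp add: eq_neg_iff_add_eq_0)
    ultimately show False by simp
  qed
  have nn: "n \<in> box N (\<lambda>_. 0) n" using nl by (simp add: box_mem)
  show ?thesis
  proof (rule ext)
    fix m
    have Vn: "Vnew N l a \<omega>s i m = (if m \<in> box N (\<lambda>_. 0) i then Dcoef N l a \<omega>s m i else 0)" for i
      unfolding Vnew_def sum_fun_apply cscale_def Vbasis_def by (simp add: sum_delta_mult finite_box)
    have R: "(\<Sum>i\<in>box N (\<lambda>_. 0) n. cscale (Dbar N l a \<omega>s i n) (Vnew N l a \<omega>s i)) m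
        = (\<Sum>i\<in>box N (\<lambda>_. 0) n. if m \<in> box N (\<lambda>_. 0) i then Dbar N l a \<omega>s i n * Dcoef N l a \<omega>s m i else 0)"
      unfolding sum_fun_apply cscale_def Vn by (simp add: if_distrib cong: if_cong)
    show "Vbasis n m = (\<Sum>i\<in>box N (\<lambda>_. 0) n. cscale (Dbar N l a \<omega>s i n) (Vnew N l a \<omega>s i)) m"
    proof (cases "m \<in> box N (\<lambda>_. 0) n")
      case True
      have set: "{i \<in> box N (\<lambda>_. 0) n. m \<in> box N (\<lambda>_. 0) i} = box N m n"
        using True by (auto simp: box_mem)
      have "(\<Sum>i\<in>box N (\<lambda>_. 0) n. if m \<in> box N (\<lambda>_. 0) i then Dbar N l a \<omega>s i n * Dcoef N l a \<omega>s m i else 0)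
          = (\<Sum>i\<in>box N m n. Dbar N l a \<omega>s i n * Dcoef N l a \<omega>s m i)"
        unfolding set[symmetric] by (simp add: sum.inter_filter finite_box)
      also have "\<dots> = (if m = n then 1 else 0)"
        by (rule inv_sum[OF nl True nzw])
      finally show ?thesis unfolding R Vbasis_def by simp
    next
      case False
      have "m \<notin> box N (\<lambda>_. 0) i" if "i \<in> box N (\<lambda>_. 0) n" for i
        using that False by (force simp: box_mem)
      then have "(\<Sum>i\<in>box N (\<lambda>_. 0) n. if m \<in> box N (\<lambda>_. 0) i then Dbar N l a \<omega>s i n * Dcoef N l a \<omega>s m i else 0) = 0"
        by (intro sum.neutral) auto
      moreover have "m \<noteq> n" using False nn by auto
      ultimately show ?thesis unfolding R Vbasis_def by simp
    qed
  qed
qed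

end
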